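(* If $\Delta(\Phi_{23},\Phi_{13},\Phi_{12})$ and $\Delta(\Phi_1,\Phi_2,\Phi_3)$ are reciprocal triangles with interior points $\Phi$ and $\Phi_{123}$ respectively, then $$\frac{(\Phi_1-\Phi_2)(\Phi_3-\Phi_{123})}{(\Phi_2-\Phi_3)(\Phi_{123}-\Phi_1)}=\frac{(\Phi_{23}-\Phi_{13})(\Phi_{12}-\Phi)}{(\Phi_{13}-\Phi_{12})(\Phi-\Phi_{23})},$$ that is, $Q(\Phi_1,\Phi_2,\Phi_3,\Phi_{123})=Q(\Phi_{23},\Phi_{13},\Phi_{12},\Phi)$.
   Context: The plane is identified with $\mathbb{C}$. The cross-ratio of four points is $Q(P_1,P_2,P_3,P_4)=\frac{(P_1-P_2)(P_3-P_4)}{(P_2-P_3)(P_4-P_1)}$. Reciprocal triangles: let $\Delta(\Phi_{23},\Phi_{13},\Phi_{12})$ be a non-degenerate triangle and $\Phi$ an additional point; let $\Delta(\Phi_1,\Phi_2,\Phi_3)$ be a non-degenerate triangle whose edges $(\Phi_1,\Phi_2)$, $(\Phi_2,\Phi_3)$, $(\Phi_3,\Phi_1)$ are parallel to the segments $(\Phi,\Phi_{12})$, $(\Phi,\Phi_{23})$, $(\Phi,\Phi_{13})$ respectively. The two triangles are reciprocal with interior points $\Phi$, $\Phi_{123}$ if the point $\Phi_{123}$ is such that the segments $(\Phi_1,\Phi_{123})$, $(\Phi_2,\Phi_{123})$, $(\Phi_3,\Phi_{123})$ are parallel to the edges $(\Phi_{13},\Phi_{12})$, $(\Phi_{12},\Phi_{23})$,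 $(\Phi_{23},\Phi_{13})$ respectively. *)

theory Defs
  imports "HOL-Analysis.Analysis"
begin

definition cross_ratio :: "complex \<Rightarrow> complex \<Rightarrow> complex \<Rightarrow> complex \<Rightarrow> complex" where
  "cross_ratio P1 P2 P3 P4 = ((P1 - P2) * (P3 - P4)) / ((P2 - P3) * (P4 - P1))"

text \<open>The segment (a,b) is parallel to the segment (c,d): both segments are
  non-degenerate and their direction vectors are real multiples of each other.\<close>
definition parallel :: "complex \<Rightarrow> complex \<Rightarrow> complex \<Rightarrow> complex \<Rightarrow> bool" where
  "parallel a b c d \<longleftrightarrow> a \<noteq> b \<and> c \<noteq> d \<and> Im ((b - a) * cnj (d - c)) = 0"

definition nondeg_triangle :: "complex \<Rightarrow> complex \<Rightarrow> complex \<Rightarrow> bool" where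
  "nondeg_triangle a b c \<longleftrightarrow> \<not> collinear {a, b, c}"

definition reciprocal_triangles ::
  "complex \<Rightarrow> complex \<Rightarrow> complex \<Rightarrow> complex \<Rightarrow> complex \<Rightarrow> complex \<Rightarrow> complex \<Rightarrow> complex \<Rightarrow> bool" where
  "reciprocal_triangles F23 F13 F12 F F1 F2 F3 F123 \<longleftrightarrow>
     nondeg_triangle F23 F13 F12 \<and> nondeg_triangle F1 F2 F3 \<and>
     parallel F1 F2 F F12 \<and> parallel F2 F3 F F23 \<and> parallel F3 F1 F F13 \<and>
     parallel F1 F123 F13 F12 \<and> parallel F2 F123 F12 F23 \<and> parallel F3 F123 F23 F13"

end

theory Submission
  imports Defs
begin

lemma par_real:
  assumes "Im (x * cnj z) = 0" "z \<noteq> 0"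
  shows "x = complex_of_real (Re (x * cnj z) / (cmod z)^2) * z"
proof -
  have h: "x * cnj z = complex_of_real (Re (x * cnj z))"
    using assms(1) by (simp add: complex_eq_iff)
  have "z * cnj z = complex_of_real ((cmod z)^2)"
    by (metis complex_norm_square)
  hence "x * (z * cnj z) = complex_of_real (Re (x * cnj z)) * z"
    using h by (metis mult.assoc mult.commute)
  hence "x * complex_of_real ((cmod z)^2) = complex_of_real (Re (x * cnj z)) * z"
    by (simp add: \<open>z * cnj z = _\<close>)
  moreover have "cmod z \<noteq> 0" using assms(2) by simp
  ultimately show ?thesis
    by (simp add: field_simps)
qed

lemma par_ex:
  assumes "parallel a b c d"
  shows "\<exists>t::real. t \<noteq> 0 \<and> b - a = complex_of_real t * (d - c)"
proof -
  have n: "d - c \<noteq> 0" "b - a \<noteq> 0" using assms by (auto simp: parallel_def)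
  define t where "t = Re ((b - a) * cnj (d - c)) / (cmod (d - c))^2"
  have "b - a = complex_of_real t * (d - c)"
    unfolding t_def by (rule par_real) (use assms n in \<open>auto simp: parallel_def\<close>)
  moreover have "t \<noteq> 0" using n calculation by auto
  ultimately show ?thesis by blast
qed

lemma noncol:
  assumes "\<not> collinear {a, b, c::complex}"
  shows "Im ((b - a) * cnj (c - a)) \<noteq> 0"
proof
  assume h: "Im ((b - a) * cnj (c - a)) = 0"
  have "b \<noteq> a" using assms by (metis collinear_2 insert_absorb2 insert_commute)
  hence nz: "b - a \<noteq> 0" by simp
  have "Im ((c - a) * cnj (b - a)) = 0"
    proof -
    have "cnj ((b - a) * cnj (c - a)) = (c - a) * cnj (b - a)" by simp
    hence "Im ((c - a) * cnj (b - a)) = - Im ((b - a) * cnj (c - a))" by (metis cnj.sel(2))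
    thus ?thesis using h by simp
  qed
  then obtain t where t: "c - a = complex_of_real t * (b - a)"
    using par_real[OF _ nz] by blast
  have c: "c = a + t *\<^sub>R (b - a)"
    using t by (simp add: scaleR_conv_of_real) (metis add.commute diff_add_cancel)
  have "\<forall>x\<in>{a, b, c}. \<exists>s. x = a + s *\<^sub>R (b - a)"
  proof -
    have "a = a + 0 *\<^sub>R (b - a)" "b = a + 1 *\<^sub>R (b - a)" by simp_all
    thus ?thesis using c by blast
  qed
  hence "collinear {a, b, c}" unfolding collinear_alt by blast
  thus False using assms by simp
qed

theorem corollary1:
  fixes F F1 F2 F3 F12 F13 F23 F123 :: complex
  assumes "reciprocal_triangles F23 F13 F12 F F1 F2 F3 F123"
  shows "cross_ratio F1 F2 F3 F123 = cross_ratio F23 F13 F12 F"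
proof -
  note R = assms[unfolded reciprocal_triangles_def]
  obtain a where a: "F2 - F1 = complex_of_real a * (F12 - F)" "a \<noteq> 0"
    using par_ex[of F1 F2 F F12] R by blast
  obtain b where b: "F3 - F2 = complex_of_real b * (F23 - F)" "b \<noteq> 0"
    using par_ex[of F2 F3 F F23] R by blast
  obtain c where c: "F1 - F3 = complex_of_real c * (F13 - F)" "c \<noteq> 0"
    using par_ex[of F3 F1 F F13] R by blast
  obtain e where e: "F123 - F1 = complex_of_real e * (F12 - F13)" "e \<noteq> 0"
    using par_ex[of F1 F123 F13 F12] R by blast
  obtain g where g: "F123 - F2 = complex_of_real g * (F23 - F12)" "g \<noteq> 0"
    using par_ex[of F2 F123 F12 F23] R by blast
  obtain d where d: "F123 - F3 = complex_of_real d * (F13 - F23)" "d \<noteq> 0"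
    using par_ex[of F3 F123 F23 F13] R by blast
  have nz: "F12 - F \<noteq> 0" "F23 - F \<noteq> 0" "F12 - F13 \<noteq> 0"
    using R by (auto simp: parallel_def)
  define u where "u = F12 - F"
  define v where "v = F23 - F"
  define w where "w = F13 - F"
  define p where "p = Im (u * cnj w)"
  define q where "q = Im (v * cnj w)"
  define r where "r = Im (v * cnj u)"
  have E1: "complex_of_real a * u + complex_of_real b * v + complex_of_real c * w = 0"
  proof -
    have "(F2 - F1) + (F3 - F2) + (F1 - F3) = 0" by simp
    thus ?thesis using a b c by (simp add: u_def v_def w_def)
  qed
  have E2: "complex_of_real e * (u - w) - complex_of_real g * (v - u) - complex_of_real a * u = 0"
  proof -
    have "(F123 - F1) - (F123 - F2) - (F2 - F1) = 0" by simp
    moreover have "F12 - F13 = u - w" "F23 - F12 = v - u" by (simp_all add: u_def v_def w_def)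
    ultimately show ?thesis using a e g by (simp add: u_def)
  qed
  have E3: "complex_of_real g * (v - u) - complex_of_real d * (w - v) - complex_of_real b * v = 0"
  proof -
    have "(F123 - F2) - (F123 - F3) - (F3 - F2) = 0" by simp
    moreover have "F13 - F23 = w - v" "F23 - F12 = v - u" by (simp_all add: u_def v_def w_def)
    ultimately show ?thesis using b d g by (simp add: v_def)
  qed
  have X1: "a * p + b * q = 0"
  proof -
    have "Im ((complex_of_real a * u + complex_of_real b * v + complex_of_real c * w) * cnj w) = a * p + b * q"
      by (simp add: p_def q_def algebra_simps)
    thus ?thesis using E1 by simp
  qed
  have X2: "e * p - g * r = 0"
  proof -
    have "Im ((complex_of_real e * (u - w) - complex_of_real g * (v - u) - complex_of_real a * u) * cnj u) = e * p - g * r"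
      by (simp add: p_def r_def algebra_simps)
    thus ?thesis using E2 by simp
  qed
  have X3: "g * r + d * q = 0"
  proof -
    have "Im ((complex_of_real g * (v - u) - complex_of_real d * (w - v) - complex_of_real b * v) * cnj v) = g * r + d * q"
      by (simp add: q_def r_def algebra_simps)
    thus ?thesis using E3 by simp
  qed
  have "Im ((F2 - F1) * cnj (F3 - F1)) \<noteq> 0"
    using noncol R by (simp add: nondeg_triangle_def)
  moreover have "F3 - F1 = - (complex_of_real c * w)" using c by (simp add: w_def algebra_simps)
  moreover have "Im ((complex_of_real a * u) * cnj (- (complex_of_real c * w))) = - (a * c * p)"
    by (simp add: p_def algebra_simps)
  ultimately have "- (a * c * p) \<noteq> 0" using a(1) unfolding u_def by metis
  hence pnz: "p \<noteq> 0" by simp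
  have "{F3, F1, F2} = {F1, F2, F3}" by auto
  hence "Im ((F1 - F3) * cnj (F2 - F3)) \<noteq> 0"
    using noncol[of F3 F1 F2] R by (simp add: nondeg_triangle_def)
  moreover have "F2 - F3 = - (complex_of_real b * v)" using b by (simp add: v_def algebra_simps)
  moreover have "Im ((complex_of_real c * w) * cnj (- (complex_of_real b * v))) = c * b * q"
    by (simp add: q_def algebra_simps)
  ultimately have "c * b * q \<noteq> 0" using c(1) unfolding w_def by metis
  hence qnz: "q \<noteq> 0" by simp
  have "(a * d - b * e) * (p * q) = (a * p) * (d * q) - (b * q) * (e * p)" by (simp add: algebra_simps)
  also have "\<dots> = 0" using X1 X2 X3
    by (simp add: eq_neg_iff_add_eq_0[symmetric] algebra_simps)
  finally have ad: "a * d = b * e" using pnz qnz by simp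
  hence adc: "complex_of_real a * complex_of_real d = complex_of_real b * complex_of_real e"
    by (metis of_real_mult)
  have h1: "F1 - F2 = - (complex_of_real a * u)" using a by (simp add: u_def algebra_simps)
  have h2: "F3 - F123 = - (complex_of_real d * (w - v))" using d by (simp add: v_def w_def algebra_simps)
  have h3: "F2 - F3 = - (complex_of_real b * v)" using b by (simp add: v_def algebra_simps)
  have h4: "F123 - F1 = complex_of_real e * (u - w)" using e by (simp add: u_def w_def)
  have h5: "F23 - F13 = v - w" "F12 - F = u" "F13 - F12 = w - u" "F - F23 = - v"
    by (simp_all add: u_def v_def w_def)
  have unz: "u \<noteq> 0" "v \<noteq> 0" "u - w \<noteq> 0" "w - u \<noteq> 0" using nz by (auto simp: u_def v_def w_def)
  show ?thesis
    unfolding cross_ratio_def h1 h2 h3 h4 h5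
    using unz a(2) b(2) c(2) d(2) e(2) adc
    by (simp add: field_simps)
qed

end
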